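(* Let $m\ge2$ be even, $n\ge2$, and let $\mathcal{A}$ be a positive semi-definite Hankel tensor of order $m$ and dimension $n$ with Vandermonde decomposition $\mathcal{A}=\sum_{k=1}^r\alpha_k u_k^m$, where $\alpha_k\in\mathbb{R}\setminus\{0\}$ and $u_k=(1,\mu_k,\dots,\mu_k^{n-1})^T$ with pairwise distinct real $\mu_k$. Then: (i) $\alpha_1+\alpha_2+\cdots+\alpha_r\ge0$; (ii) if $r>n$, then the number of indices $k$ with $\alpha_k>0$ is at least $n$; (iii) if $r\le n$, then $\alpha_k>0$ for all $k\in\{1,\dots,r\}$.
   Context: A Hankel tensor of order $m$ and dimension $n$ has entries $a_{i_1\cdots i_m}=v_{i_1+\cdots+i_m-m}$ for some vector $v=(v_0,\dots,v_{(n-1)m})$. For $u\in\mathbb{R}^n$, $u^m$ denotes the rank-one tensor with entries $u_{i_1}\cdots u_{i_m}$. $\mathcal{A}$ is positive semi-definite if $\mathcal{A}x^m=\sum a_{i_1\cdots i_m}x_{i_1}\cdots x_{i_m}\ge0$ for all $x\in\mathbb{R}^n$. *)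

theory Defs
  imports "HOL-Analysis.Analysis"
begin

text \<open>A real tensor of order m and dimension n is modelled as a function on index
lists: A is is the entry a_{i_1...i_m} for is = [i_1,...,i_m], where indices are
0-based (i_j < n). Values outside the index set are irrelevant.\<close>

definition tensor_indices :: "nat \<Rightarrow> nat \<Rightarrow> nat list set" where
  "tensor_indices m n = {is. length is = m \<and> (\<forall>i\<in>set is. i < n)}"

definition hankel_tensor :: "nat \<Rightarrow> nat \<Rightarrow> (nat list \<Rightarrow> real) \<Rightarrow> bool" where
  "hankel_tensor m n A \<longleftrightarrow> (\<exists>v::nat \<Rightarrow> real. \<forall>is\<in>tensor_indices m n. A is = v (sum_list is))"

definition tensor_form :: "nat \<Rightarrow> nat \<Rightarrow> (nat list \<Rightarrow> real) \<Rightarrow> (nat \<Rightarrow> real) \<Rightarrow> real" where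
  "tensor_form m n A x = (\<Sum>is\<in>tensor_indices m n. A is * (\<Prod>j<m. x (is ! j)))"

definition psd_tensor :: "nat \<Rightarrow> nat \<Rightarrow> (nat list \<Rightarrow> real) \<Rightarrow> bool" where
  "psd_tensor m n A \<longleftrightarrow> (\<forall>x::nat \<Rightarrow> real. tensor_form m n A x \<ge> 0)"

definition rank_one_power :: "nat \<Rightarrow> (nat \<Rightarrow> real) \<Rightarrow> nat list \<Rightarrow> real" where
  "rank_one_power m u is = (\<Prod>j<m. u (is ! j))"

definition vandermonde_vec :: "real \<Rightarrow> nat \<Rightarrow> real" where
  "vandermonde_vec \<mu> i = \<mu> ^ i"

end

theory Submission
  imports Defs "HOL-Computational_Algebra.Polynomial"
begin

lemma ti_0: "tensor_indices 0 n = {[]}"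
  by (auto simp: tensor_indices_def)

lemma ti_Suc: "tensor_indices (Suc m) n = (\<lambda>(i,is). i#is) ` ({..<n} \<times> tensor_indices m n)"
  unfolding tensor_indices_def
  by (auto simp: length_Suc_conv image_iff)

lemma finite_ti: "finite (tensor_indices m n)"
  by (induction m) (auto simp: ti_0 ti_Suc)

lemma sum_prod_expand:
  fixes f :: "nat \<Rightarrow> real"
  shows "(\<Sum>is\<in>tensor_indices m n. \<Prod>j<m. f (is ! j)) = (\<Sum>i<n. f i) ^ m"
proof (induction m)
  case 0 then show ?case by (simp add: ti_0)
next
  case (Suc m)
  have inj: "inj_on (\<lambda>(i,is). i#is) ({..<n} \<times> tensor_indices m n)"
    by (auto simp: inj_on_def)
  have "(\<Sum>is\<in>tensor_indices (Suc m) n. \<Prod>j<Suc m. f (is ! j))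
      = (\<Sum>(i,is)\<in>{..<n} \<times> tensor_indices m n. \<Prod>j<Suc m. f ((i#is) ! j))"
    unfolding ti_Suc by (subst sum.reindex[OF inj]) (simp add: case_prod_unfold)
  also have "\<dots> = (\<Sum>(i,is)\<in>{..<n} \<times> tensor_indices m n. f i * (\<Prod>j<m. f (is ! j)))"
    by (rule sum.cong) (auto simp del: prod.lessThan_Suc simp add: prod.lessThan_Suc_shift)
  also have "\<dots> = (\<Sum>i<n. \<Sum>is\<in>tensor_indices m n. f i * (\<Prod>j<m. f (is ! j)))"
    by (rule sum.cartesian_product[symmetric])
  also have "\<dots> = (\<Sum>i<n. f i) * (\<Sum>is\<in>tensor_indices m n. \<Prod>j<m. f (is ! j))"
    by (simp add: sum_distrib_left[symmetric] sum_distrib_right[symmetric])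
  finally show ?case using Suc by simp
qed

lemma form_eval:
  assumes "\<forall>is\<in>tensor_indices m n.
           A is = (\<Sum>k=1..r. \<alpha> k * rank_one_power m (vandermonde_vec (\<mu> k)) is)"
  shows "tensor_form m n A x = (\<Sum>k=1..r. \<alpha> k * (\<Sum>i<n. \<mu> k ^ i * x i) ^ m)"
proof -
  have "tensor_form m n A x = (\<Sum>is\<in>tensor_indices m n. \<Sum>k=1..r. \<alpha> k * (\<Prod>j<m. \<mu> k ^ (is!j) * x (is ! j)))"
    unfolding tensor_form_def
    by (rule sum.cong) (auto simp: assms sum_distrib_right rank_one_power_def vandermonde_vec_def prod.distrib mult.assoc)
  also have "\<dots> = (\<Sum>k=1..r. \<alpha> k * (\<Sum>is\<in>tensor_indices m n. (\<Prod>j<m. \<mu> k ^ (is!j) * x (is ! j))))"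
    by (subst sum.swap) (simp add: sum_distrib_left)
  also have "\<dots> = (\<Sum>k=1..r. \<alpha> k * (\<Sum>i<n. \<mu> k ^ i * x i) ^ m)"
    by (rule sum.cong[OF refl], subst sum_prod_expand[symmetric], rule refl)
  finally show ?thesis .
qed

lemma poly_form:
  fixes p :: "real poly"
  assumes "degree p < n"
  shows "(\<Sum>i<n. t ^ i * coeff p i) = poly p t"
proof -
  have "poly p t = (\<Sum>i\<le>degree p. coeff p i * t ^ i)" by (simp add: poly_altdef)
  also have "\<dots> = (\<Sum>i<n. coeff p i * t ^ i)"
    by (rule sum.mono_neutral_left) (use assms in \<open>auto simp: coeff_eq_0\<close>)
  finally show ?thesis by (simp add: mult.commute)
qed

lemma form_poly:
  fixes \<mu> :: "nat \<Rightarrow> real"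
  assumes "\<forall>is\<in>tensor_indices m n.
           A is = (\<Sum>k=1..r. \<alpha> k * rank_one_power m (vandermonde_vec (\<mu> k)) is)"
    and "finite S" and "card S < n"
  shows "tensor_form m n A (coeff (\<Prod>j\<in>S. [:-\<mu> j, 1:]))
       = (\<Sum>k=1..r. \<alpha> k * (\<Prod>j\<in>S. \<mu> k - \<mu> j) ^ m)"
proof -
  have deg: "degree (\<Prod>j\<in>S. [:-\<mu> j, 1:]) = card S"
    by (subst degree_prod_eq_sum_degree) auto
  show ?thesis using assms
    by (simp add: form_eval[OF assms(1)] poly_form deg poly_prod)
qed

theorem proposition4p1:
  fixes m n r :: nat and A :: "nat list \<Rightarrow> real"
    and \<alpha> \<mu> :: "nat \<Rightarrow> real"
  assumes "even m" and "m \<ge> 2" and "n \<ge> 2"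
    and "hankel_tensor m n A"
    and "psd_tensor m n A"
    and "\<forall>k\<in>{1..r}. \<alpha> k \<noteq> 0"
    and "inj_on \<mu> {1..r}"
    and "\<forall>is\<in>tensor_indices m n.
           A is = (\<Sum>k=1..r. \<alpha> k * rank_one_power m (vandermonde_vec (\<mu> k)) is)"
  shows "(\<Sum>k=1..r. \<alpha> k) \<ge> 0
         \<and> (r > n \<longrightarrow> card {k\<in>{1..r}. \<alpha> k > 0} \<ge> n)
         \<and> (r \<le> n \<longrightarrow> (\<forall>k\<in>{1..r}. \<alpha> k > 0))"
proof (intro conjI impI ballI)
  have psd: "(\<Sum>k=1..r. \<alpha> k * (\<Prod>j\<in>S. \<mu> k - \<mu> j) ^ m) \<ge> 0" if "finite S" "card S < n" for S
  proof -
    have "tensor_form m n A (coeff (\<Prod>j\<in>S. [:-\<mu> j, 1:])) \<ge> 0" using assms(5) unfolding psd_tensor_def by blast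
    thus ?thesis using form_poly[OF assms(8) that] by simp
  qed
  show "(\<Sum>k=1..r. \<alpha> k) \<ge> 0" using psd[of "{}"] assms(3) by simp
next
  assume rn: "r > n"
  have psd: "(\<Sum>k=1..r. \<alpha> k * (\<Prod>j\<in>S. \<mu> k - \<mu> j) ^ m) \<ge> 0" if "finite S" "card S < n" for S
  proof -
    have "tensor_form m n A (coeff (\<Prod>j\<in>S. [:-\<mu> j, 1:])) \<ge> 0" using assms(5) unfolding psd_tensor_def by blast
    thus ?thesis using form_poly[OF assms(8) that] by simp
  qed
  show "card {k\<in>{1..r}. \<alpha> k > 0} \<ge> n"
  proof (rule ccontr)
    define S where "S = {k\<in>{1..r}. \<alpha> k > 0}"
    assume "\<not> ?thesis"
    hence cS: "card S < n" by (simp add: S_def)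
    have fS: "finite S" by (simp add: S_def)
    have "S \<noteq> {1..r}" using cS rn by auto
    then obtain k0 where k0: "k0 \<in> {1..r}" "k0 \<notin> S" unfolding S_def by blast
    have le: "\<alpha> k * (\<Prod>j\<in>S. \<mu> k - \<mu> j) ^ m \<le> 0" if "k \<in> {1..r}" for k
    proof (cases "k \<in> S")
      case True
      hence "(\<Prod>j\<in>S. \<mu> k - \<mu> j) = 0" using fS by (meson prod_zero_iff right_minus_eq)
      thus ?thesis using assms(2) by (simp add: power_0_left)
    next
      case False
      then have "\<not> \<alpha> k > 0" using that by (simp add: S_def)
      moreover have "\<alpha> k \<noteq> 0" using that assms(6) by blast
      ultimately have "\<alpha> k < 0" by linarith
      moreover have "(\<Prod>j\<in>S. \<mu> k - \<mu> j) ^ m \<ge> 0" using assms(1) by (simp add: zero_le_even_power)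
      ultimately show ?thesis by (simp add: mult_nonpos_nonneg)
    qed
    have "\<forall>j\<in>S. \<mu> k0 \<noteq> \<mu> j"
    proof
      fix j assume "j \<in> S"
      hence "j \<in> {1..r}" "j \<noteq> k0" using k0 by (auto simp: S_def)
      thus "\<mu> k0 \<noteq> \<mu> j" using assms(7) k0(1) by (auto dest: inj_onD)
    qed
    hence "(\<Prod>j\<in>S. \<mu> k0 - \<mu> j) \<noteq> 0" using fS by simp
    hence "(\<Prod>j\<in>S. \<mu> k0 - \<mu> j) ^ m > 0" using assms(1) by (simp add: zero_less_power_eq)
    moreover have "\<alpha> k0 < 0"
    proof -
      have "\<not> \<alpha> k0 > 0" using k0 by (simp add: S_def)
      moreover have "\<alpha> k0 \<noteq> 0" using k0 assms(6) by blast
      ultimately show ?thesis by linarith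
    qed
    ultimately have lt: "\<alpha> k0 * (\<Prod>j\<in>S. \<mu> k0 - \<mu> j) ^ m < 0" by (simp add: mult_neg_pos)
    have "(\<Sum>k\<in>{1..r}. \<alpha> k * (\<Prod>j\<in>S. \<mu> k - \<mu> j) ^ m) < (\<Sum>k\<in>{1..r}. (0::real))"
      by (rule sum_strict_mono_ex1) (use le k0 lt in auto)
    with psd[OF fS cS] show False by simp
  qed
next
  fix k assume rn: "r \<le> n" and k: "k \<in> {1..r}"
  have psd: "(\<Sum>k=1..r. \<alpha> k * (\<Prod>j\<in>S. \<mu> k - \<mu> j) ^ m) \<ge> 0" if "finite S" "card S < n" for S
  proof -
    have "tensor_form m n A (coeff (\<Prod>j\<in>S. [:-\<mu> j, 1:])) \<ge> 0" using assms(5) unfolding psd_tensor_def by blast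
    thus ?thesis using form_poly[OF assms(8) that] by simp
  qed
  define S where "S = {1..r} - {k}"
  have fS: "finite S" by (simp add: S_def)
  have cS: "card S < n" using k rn by (simp add: S_def) linarith
  have z: "\<alpha> j * (\<Prod>i\<in>S. \<mu> j - \<mu> i) ^ m = 0" if "j \<in> {1..r}" "j \<noteq> k" for j
  proof -
    have "j \<in> S" using that by (simp add: S_def)
    hence "(\<Prod>i\<in>S. \<mu> j - \<mu> i) = 0" using fS by (meson prod_zero_iff right_minus_eq)
    thus ?thesis using assms(2) by (simp add: power_0_left)
  qed
  have "(\<Sum>j=1..r. \<alpha> j * (\<Prod>i\<in>S. \<mu> j - \<mu> i) ^ m) = \<alpha> k * (\<Prod>i\<in>S. \<mu> k - \<mu> i) ^ m"
    by (rule sum.remove[OF _ k, THEN trans]) (auto simp: z)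
  hence ge: "\<alpha> k * (\<Prod>i\<in>S. \<mu> k - \<mu> i) ^ m \<ge> 0" using psd[OF fS cS] by simp
  have "\<forall>j\<in>S. \<mu> k \<noteq> \<mu> j"
  proof
    fix j assume "j \<in> S"
    hence "j \<in> {1..r}" "j \<noteq> k" by (auto simp: S_def)
    thus "\<mu> k \<noteq> \<mu> j" using assms(7) k by (auto dest: inj_onD)
  qed
  hence "(\<Prod>i\<in>S. \<mu> k - \<mu> i) \<noteq> 0" using fS by simp
  hence "(\<Prod>i\<in>S. \<mu> k - \<mu> i) ^ m > 0" using assms(1) by (simp add: zero_less_power_eq)
  with ge have "\<alpha> k \<ge> 0" by (simp add: zero_le_mult_iff)
  moreover have "\<alpha> k \<noteq> 0" using assms(6) k by blast
  ultimately show "\<alpha> k > 0" by linarith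
qed

end
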